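(* Let $\tau = \beta/\alpha$ and $n=2$. Let $H$ be the $2\times 2$ matrix with entries $H_{ii} = \gamma_i$ and $H_{ij} = -(\beta/\alpha)\frac{\gamma_i+\gamma_j}{2}$ for $i \neq j$. Then $H$ is positive definite if and only if \[ \sqrt{\max \left\{ \frac{\gamma_1}{\gamma_2}, \frac{\gamma_2}{\gamma_1} \right\}} \leq \frac{1+\sqrt{1 - \tau^2}}{\tau}. \] Under this condition, the Hessian of $U_{\mathrm{ISP}}$ with respect to $(p^s_1,p^s_2)$ in the region where both demands are strictly positive, given by $-2\alpha H$, is negative definite, and so $U_{\mathrm{ISP}}$ is a concave function of $(p^s_1, p^s_2)$ in that region.
   Context: Setting: a single ISP and $n=2$ content providers (CPs). For CP $i$, $p^s_i$ is the price per unit demand paid by internauts to the ISP for access to CP $i$'s content, $p^c_i$ the price per unit demand paid to CP $i$, $p^a_i \geq 0$ CP $i$'s advertising revenue per unit demand, and $p_i = p^s_i + p^c_i$. When both demands are strictly positive, demand for CP $i$'s content is $d_i = D_0 - \alpha p_i + \beta p_j$ ($j \neq i$), with $\alpha > \beta > 0$. In the ex post regulation game the ISP and CPs set prices first, and then a regulator sets the side payment $p^d_i$ from CP $i$ to the ISP by maximizing $U_{\mathrm{ISP},i}^{\gamma_i} U_{\mathrm{CP},i}^{1-\gamma_i}$, where $\gamma_i \in (0,1)$ is the relative weight of the ISP versus CP $i$; as a result the ISP receives the fraction $\gamma_i$ and CP $i$ the fraction $1-\gamma_i$ of the net revenue per unit demand $p_i + p^a_i$. Hence the ISP utility is $U_{\mathrm{ISP}}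 = \sum_i d_i \gamma_i (p_i + p^a_i)$. The condition that $H$ be positive definite is imposed to keep $U_{\mathrm{ISP}}$ concave in $(p^s_1,p^s_2)$ in the region of strictly positive demands. *)

theory Defs
  imports "HOL-Analysis.Analysis"
begin

definition pos_def :: "real^'n^'n \<Rightarrow> bool" where
  "pos_def M \<longleftrightarrow> (\<forall>x. x \<noteq> 0 \<longrightarrow> x \<bullet> (M *v x) > 0)"

definition neg_def :: "real^'n^'n \<Rightarrow> bool" where
  "neg_def M \<longleftrightarrow> (\<forall>x. x \<noteq> 0 \<longrightarrow> x \<bullet> (M *v x) < 0)"

definition Hmat :: "real \<Rightarrow> real \<Rightarrow> real^2 \<Rightarrow> real^2^2" where
  "Hmat \<alpha> \<beta> \<gamma> = (\<chi> i j. if i = j then \<gamma>$i else - (\<beta>/\<alpha>) * ((\<gamma>$i + \<gamma>$j) / 2))"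

definition other :: "2 \<Rightarrow> 2" where
  "other i = (if i = 1 then 2 else 1)"

text \<open>Demand for CP i's content (formula valid where both demands are strictly positive),
  as a function of the ISP prices ps, with CP prices pc fixed; p_i = ps_i + pc_i.\<close>
definition demand :: "real \<Rightarrow> real \<Rightarrow> real \<Rightarrow> real^2 \<Rightarrow> real^2 \<Rightarrow> 2 \<Rightarrow> real" where
  "demand D0 \<alpha> \<beta> pc ps i =
     D0 - \<alpha> * (ps$i + pc$i) + \<beta> * (ps$(other i) + pc$(other i))"

definition pos_region :: "real \<Rightarrow> real \<Rightarrow> real \<Rightarrow> real^2 \<Rightarrow> (real^2) set" where
  "pos_region D0 \<alpha> \<beta> pc = {ps. \<forall>i. demand D0 \<alpha> \<beta> pc ps i > 0}"

definition U_ISP :: "real \<Rightarrow> real \<Rightarrow> real \<Rightarrow> real^2 \<Rightarrow> real^2 \<Rightarrow> real^2 \<Rightarrow> real^2 \<Rightarrow> real" where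
  "U_ISP D0 \<alpha> \<beta> \<gamma> pc pa ps =
     (\<Sum>i\<in>UNIV. demand D0 \<alpha> \<beta> pc ps i * \<gamma>$i * (ps$i + pc$i + pa$i))"

end

theory Submission
  imports Defs
begin

lemma other_simps[simp]: "other 1 = 2" "other 2 = 1"
  by (auto simp: other_def)

lemma quad_H: "x \<bullet> (Hmat a b g *v x) =
   g$1 * (x$1)^2 + g$2 * (x$2)^2 - (b/a) * (g$1 + g$2) * (x$1 * x$2)"
  by (simp add: inner_vec_def matrix_vector_mult_def sum_2 Hmat_def power2_eq_square algebra_simps)

lemma U_expl: "U_ISP D0 a b g pc pa x =
   (D0 - a*(x$1+pc$1) + b*(x$2+pc$2)) * g$1 * (x$1+pc$1+pa$1)
 + (D0 - a*(x$2+pc$2) + b*(x$1+pc$1)) * g$2 * (x$2+pc$2+pa$2)"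
  by (simp add: U_ISP_def sum_2 demand_def)

lemma alg:
  fixes a b t u s :: real
  assumes a: "a > 0" "b > 0" "a \<ge> b" and t: "0 < t" "t < 1"
   and u: "u > 0" "u^2 = 1 - t^2" and s: "s \<ge> 1" "s^2 = a/b"
  shows "(4*a*b > t^2*(a+b)^2) \<longleftrightarrow> s < (1+u)/t"
proof -
  have ab: "a = s^2 * b" using s a by (simp add: field_simps)
  have "(4*a*b > t^2*(a+b)^2) \<longleftrightarrow> (4* s^2 > t^2*(1+s^2)^2)"
  proof -
    have "4*a*b = b^2 * (4* s^2)" "t^2*(a+b)^2 = b^2*(t^2*(1+s^2)^2)" unfolding ab
      by (simp_all add: power2_eq_square algebra_simps)
    moreover have "b^2 > 0" using a by simp
    ultimately show ?thesis by (metis mult_less_cancel_left_pos)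
  qed
  also have "\<dots> \<longleftrightarrow> (2* s > t*(1+s^2))"
  proof -
    have "4* s^2 = (2* s)^2" "t^2*(1+s^2)^2 = (t*(1+s^2))^2" by (simp_all add: power2_eq_square)
    moreover have "2* s \<ge> 0" "t*(1+s^2) \<ge> 0" using s(1) t by auto
    ultimately show ?thesis by (metis power_less_imp_less_base power_strict_mono zero_less_numeral pos2 order_le_less_trans zero_le_power2)
  qed
  also have "\<dots> \<longleftrightarrow> ((t* s - 1)^2 < u^2)"
  proof -
    have e: "(t* s - 1)^2 - u^2 = t*(t* s^2 + t - 2* s)" using u by (simp add: power2_eq_square algebra_simps)
    have "(t*(t* s^2 + t - 2* s) < 0) \<longleftrightarrow> (t* s^2 + t - 2* s < 0)" using t by (simp add: mult_less_0_iff)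
    then show ?thesis using e by (auto simp: algebra_simps power2_eq_square)
  qed
  also have "\<dots> \<longleftrightarrow> (t* s - 1 < u)"
  proof
    assume h: "(t* s - 1)^2 < u^2"
    show "t* s - 1 < u"
    proof (rule ccontr)
      assume "\<not> t* s - 1 < u"
      then have "u \<le> t* s - 1" by simp
      then have "u^2 \<le> (t* s-1)^2" using u by (intro power_mono) auto
      with h show False by simp
    qed
  next
    assume h: "t* s - 1 < u"
    show "(t* s - 1)^2 < u^2"
    proof (cases "t* s - 1 \<ge> 0")
      case True then show ?thesis using h by (intro power_strict_mono) auto
    next
      case False
      have "t*t < t" using t by simp
      moreover have "(1-t)^2 = 1 - 2*t + t*t" by (simp add: power2_eq_square algebra_simps)
      ultimately have "(1-t)^2 < u^2" using u by (simp add: power2_eq_square)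
      moreover have "(t* s-1)^2 \<le> (1-t)^2"
      proof -
        have "(t* s-1)^2 = (1 - t* s)^2" by (simp add: power2_eq_square algebra_simps)
        also have "\<dots> \<le> (1-t)^2" using False s t
          by (intro power_mono) (auto simp: mult_left_mono[of 1 s t, simplified])
        finally show ?thesis .
      qed
      ultimately show ?thesis by simp
    qed
  qed
  also have "\<dots> \<longleftrightarrow> (s < (1+u)/t)" using t by (simp add: field_simps)
  finally show ?thesis .
qed

lemma vec2_nz: "(x::real^2) \<noteq> 0 \<longleftrightarrow> x$1 \<noteq> 0 \<or> x$2 \<noteq> 0"
  by (auto simp: vec_eq_iff forall_2)

lemma posdef2:
  fixes g1 g2 k :: real
  assumes g: "g1 > 0" "g2 > 0"
  shows "(\<forall>x::real^2. x \<noteq> 0 \<longrightarrow> g1 * (x$1)^2 + g2 * (x$2)^2 - k * (x$1 * x$2) > 0)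
     \<longleftrightarrow> 4*g1*g2 > k^2"
proof
  assume h: "\<forall>x::real^2. x \<noteq> 0 \<longrightarrow> g1 * (x$1)^2 + g2 * (x$2)^2 - k * (x$1 * x$2) > 0"
  have "vector [k, 2*g1] \<noteq> (0::real^2)" using g by (simp add: vec2_nz)
  from h[rule_format, OF this] have "g1 * k^2 + g2 * (2*g1)^2 - k*(k*(2*g1)) > 0" by simp
  then have "g1 * (4*g1*g2 - k^2) > 0" by (simp add: power2_eq_square algebra_simps)
  then show "4*g1*g2 > k^2" using g by (simp add: zero_less_mult_iff)
next
  assume h: "4*g1*g2 > k^2"
  show "\<forall>x::real^2. x \<noteq> 0 \<longrightarrow> g1 * (x$1)^2 + g2 * (x$2)^2 - k * (x$1 * x$2) > 0"
  proof (intro allI impI)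
    fix x :: "real^2" assume "x \<noteq> 0"
    then have nz: "x$1 \<noteq> 0 \<or> x$2 \<noteq> 0" by (simp add: vec2_nz)
    have e: "4*g1*(g1 * (x$1)^2 + g2 * (x$2)^2 - k * (x$1 * x$2)) = (2*g1*x$1 - k*x$2)^2 + (4*g1*g2 - k^2)*(x$2)^2"
      by (simp add: power2_eq_square algebra_simps)
    have "(2*g1*x$1 - k*x$2)^2 + (4*g1*g2 - k^2)*(x$2)^2 > 0"
    proof (cases "x$2 = 0")
      case True
      then have "x$1 \<noteq> 0" using nz by simp
      then show ?thesis using True g by simp
    next
      case False
      then have "(4*g1*g2 - k^2)*(x$2)^2 > 0" using h by simp
      then show ?thesis by (smt (verit) zero_le_power2)
    qed
    then have "4*g1*(g1 * (x$1)^2 + g2 * (x$2)^2 - k * (x$1 * x$2)) > 0" using e by simp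
    then show "g1 * (x$1)^2 + g2 * (x$2)^2 - k * (x$1 * x$2) > 0" using g by (simp add: zero_less_mult_iff)
  qed
qed

lemma has_derivative_vec_nth': "((\<lambda>x::real^'n. x$i) has_derivative (\<lambda>h. h$i)) F"
  by (rule bounded_linear.has_derivative[OF bounded_linear_vec_nth has_derivative_ident])



theorem proposition1:
  fixes D0 \<alpha> \<beta> :: real and \<gamma> pc pa :: "real^2"
  assumes "\<alpha> > \<beta>" and "\<beta> > 0"
    and "\<forall>i. 0 < \<gamma>$i \<and> \<gamma>$i < 1"
    and "\<forall>i. pa$i \<ge> 0"
  defines "\<tau> \<equiv> \<beta> / \<alpha>"
  shows "(pos_def (Hmat \<alpha> \<beta> \<gamma>) \<longleftrightarrow>
           sqrt (max (\<gamma>$1 / \<gamma>$2) (\<gamma>$2 / \<gamma>$1)) < (1 + sqrt (1 - \<tau>^2)) / \<tau>)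
      \<and> (sqrt (max (\<gamma>$1 / \<gamma>$2) (\<gamma>$2 / \<gamma>$1)) < (1 + sqrt (1 - \<tau>^2)) / \<tau> \<longrightarrow>
           (\<exists>G. \<forall>ps \<in> pos_region D0 \<alpha> \<beta> pc.
               (U_ISP D0 \<alpha> \<beta> \<gamma> pc pa has_derivative (\<lambda>h. G ps \<bullet> h)) (at ps) \<and>
               (G has_derivative (\<lambda>h. ((-2) * \<alpha>) *\<^sub>R (Hmat \<alpha> \<beta> \<gamma> *v h))) (at ps))
           \<and> neg_def (((-2) * \<alpha>) *\<^sub>R Hmat \<alpha> \<beta> \<gamma>)
           \<and> concave_on (pos_region D0 \<alpha> \<beta> pc) (U_ISP D0 \<alpha> \<beta> \<gamma> pc pa))"
  proof -
  have a0: "\<alpha> > 0" using assms by simp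
  have g1: "\<gamma>$1 > 0" and g2: "\<gamma>$2 > 0" using assms(3) by auto
  have t: "0 < \<tau>" "\<tau> < 1" using assms a0 unfolding \<tau>_def by (auto simp: field_simps)
  define k where "k = \<tau> * (\<gamma>$1 + \<gamma>$2)"
  have PD: "pos_def (Hmat \<alpha> \<beta> \<gamma>) \<longleftrightarrow> 4*\<gamma>$1*\<gamma>$2 > k^2"
    unfolding pos_def_def quad_H using posdef2[OF g1 g2, of k]
    by (simp add: k_def \<tau>_def mult.assoc)
  define u where "u = sqrt (1 - \<tau>^2)"
  have t2: "\<tau>^2 < 1" using t by (simp add: power_less_one_iff abs_less_iff)
  have u: "u > 0" "u^2 = 1 - \<tau>^2" using t2 by (auto simp: u_def)
  have C: "4*\<gamma>$1*\<gamma>$2 > k^2 \<longleftrightarrow> sqrt (max (\<gamma>$1 / \<gamma>$2) (\<gamma>$2 / \<gamma>$1)) < (1 + u) / \<tau>"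
  proof (cases "\<gamma>$1 \<ge> \<gamma>$2")
    case True
    then have m: "max (\<gamma>$1 / \<gamma>$2) (\<gamma>$2 / \<gamma>$1) = \<gamma>$1 / \<gamma>$2"
      using g1 g2 by (simp add: max_def divide_simps) (smt (verit) mult_mono)
    have s1: "sqrt (\<gamma>$1 / \<gamma>$2) \<ge> 1" using True g2 by simp
    have "k^2 = \<tau>^2 * (\<gamma>$1 + \<gamma>$2)^2" by (simp add: k_def power_mult_distrib)
    then show ?thesis unfolding m using alg[OF g1 g2 True t u s1] g1 g2 by simp
  next
    case False
    then have F: "\<gamma>$2 \<le> \<gamma>$1 \<longrightarrow> False" "\<gamma>$1 \<le> \<gamma>$2" by auto
    then have m: "max (\<gamma>$1 / \<gamma>$2) (\<gamma>$2 / \<gamma>$1) = \<gamma>$2 / \<gamma>$1"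
      using g1 g2 by (simp add: max_def divide_simps) (smt (verit) mult_mono)
    have s1: "sqrt (\<gamma>$2 / \<gamma>$1) \<ge> 1" using F g1 by simp
    have "k^2 = \<tau>^2 * (\<gamma>$2 + \<gamma>$1)^2" by (simp add: k_def power_mult_distrib add.commute)
    then show ?thesis unfolding m using alg[OF g2 g1 F(2) t u s1] g1 g2 by (simp add: mult.commute mult.left_commute)
  qed
  have part1: "pos_def (Hmat \<alpha> \<beta> \<gamma>) \<longleftrightarrow>
           sqrt (max (\<gamma>$1 / \<gamma>$2) (\<gamma>$2 / \<gamma>$1)) < (1 + sqrt (1 - \<tau>^2)) / \<tau>"
    using PD C by (simp add: u_def)
  have PD2: "\<And>z. z \<noteq> 0 \<Longrightarrow> z \<bullet> (Hmat \<alpha> \<beta> \<gamma> *v z) > 0" if "pos_def (Hmat \<alpha> \<beta> \<gamma>)"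
    using that unfolding pos_def_def by blast
  have aQ: "\<alpha> * (z \<bullet> (Hmat \<alpha> \<beta> \<gamma> *v z)) = \<alpha>*\<gamma>$1*(z$1)^2 + \<alpha>*\<gamma>$2*(z$2)^2 - \<beta>*(\<gamma>$1+\<gamma>$2)*(z$1*z$2)" for z
    unfolding quad_H using a0 by (simp add: field_simps)
  define b0 :: "real^2" where "b0 = (\<chi> i. if i = 1 then
      - \<alpha>*\<gamma>$1*(pc$1+pa$1) + (D0 - \<alpha>*pc$1 + \<beta>*pc$2)*\<gamma>$1 + \<beta>*\<gamma>$2*(pc$2+pa$2)
    else - \<alpha>*\<gamma>$2*(pc$2+pa$2) + (D0 - \<alpha>*pc$2 + \<beta>*pc$1)*\<gamma>$2 + \<beta>*\<gamma>$1*(pc$1+pa$1))"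
  define G where "G = (\<lambda>ps. b0 + ((-2) * \<alpha>) *\<^sub>R (Hmat \<alpha> \<beta> \<gamma> *v ps))"
  have derU: "(U_ISP D0 \<alpha> \<beta> \<gamma> pc pa has_derivative (\<lambda>h. G ps \<bullet> h)) (at ps)" for ps
  proof -
    have U: "U_ISP D0 \<alpha> \<beta> \<gamma> pc pa = (\<lambda>x. (D0 - \<alpha>*(x$1+pc$1) + \<beta>*(x$2+pc$2)) * \<gamma>$1 * (x$1+pc$1+pa$1)
      + (D0 - \<alpha>*(x$2+pc$2) + \<beta>*(x$1+pc$1)) * \<gamma>$2 * (x$2+pc$2+pa$2))"
      by (rule ext) (rule U_expl)
    show ?thesis unfolding U
      apply (rule has_derivative_eq_rhs)
       apply (rule derivative_eq_intros has_derivative_vec_nth' | simp)+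
      apply (rule ext)
      using a0 apply (simp add: G_def b0_def inner_vec_def sum_2 matrix_vector_mult_def Hmat_def field_simps)
      done
  qed
  have derG: "(G has_derivative (\<lambda>h. ((-2) * \<alpha>) *\<^sub>R (Hmat \<alpha> \<beta> \<gamma> *v h))) (at ps)" for ps
    unfolding G_def
    apply (rule has_derivative_eq_rhs)
     apply (rule derivative_eq_intros bounded_linear.has_derivative[OF linear_linear[THEN iffD2, OF matrix_vector_mul_linear]] | simp)+
    done
  show ?thesis
  proof (intro conjI impI)
    show "pos_def (Hmat \<alpha> \<beta> \<gamma>) \<longleftrightarrow>
           sqrt (max (\<gamma>$1 / \<gamma>$2) (\<gamma>$2 / \<gamma>$1)) < (1 + sqrt (1 - \<tau>^2)) / \<tau>" by (rule part1)
    assume cond: "sqrt (max (\<gamma>$1 / \<gamma>$2) (\<gamma>$2 / \<gamma>$1)) < (1 + sqrt (1 - \<tau>^2)) / \<tau>"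
    then have pd: "pos_def (Hmat \<alpha> \<beta> \<gamma>)" using part1 by simp
    show "\<exists>G. \<forall>ps \<in> pos_region D0 \<alpha> \<beta> pc.
               (U_ISP D0 \<alpha> \<beta> \<gamma> pc pa has_derivative (\<lambda>h. G ps \<bullet> h)) (at ps) \<and>
               (G has_derivative (\<lambda>h. ((-2) * \<alpha>) *\<^sub>R (Hmat \<alpha> \<beta> \<gamma> *v h))) (at ps)"
      using derU derG by blast
    show "neg_def (((-2) * \<alpha>) *\<^sub>R Hmat \<alpha> \<beta> \<gamma>)"
      unfolding neg_def_def
    proof (intro allI impI)
      fix x :: "real^2" assume "x \<noteq> 0"
      then have "x \<bullet> (Hmat \<alpha> \<beta> \<gamma> *v x) > 0" using PD2[OF pd] by blast
      then show "x \<bullet> ((((-2) * \<alpha>) *\<^sub>R Hmat \<alpha> \<beta> \<gamma>) *v x) < 0"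
        using a0 unfolding scaleR_matrix_vector_assoc[symmetric] inner_scaleR_right
        by (simp add: mult_pos_pos del: scaleR_minus_left)
    qed
    have Qnn: "\<alpha>*\<gamma>$1*(z$1)^2 + \<alpha>*\<gamma>$2*(z$2)^2 - \<beta>*(\<gamma>$1+\<gamma>$2)*(z$1*z$2) \<ge> 0" for z :: "real^2"
    proof (cases "z = 0")
      case True then show ?thesis by simp
    next
      case False
      then have "z \<bullet> (Hmat \<alpha> \<beta> \<gamma> *v z) > 0" using PD2[OF pd] by blast
      then have "\<alpha> * (z \<bullet> (Hmat \<alpha> \<beta> \<gamma> *v z)) \<ge> 0" using a0 by simp
      then show ?thesis using aQ by simp
    qed
    have dem: "demand D0 \<alpha> \<beta> pc (v *\<^sub>R x + w *\<^sub>R y) i = v * demand D0 \<alpha> \<beta> pc x i + w * demand D0 \<alpha> \<beta> pc y i"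
      if "v + w = 1" for v w x y i
    proof -
      have ww: "w = 1 - v" using that by simp
      show ?thesis unfolding ww by (simp add: demand_def algebra_simps)
    qed
    have cvx: "convex (pos_region D0 \<alpha> \<beta> pc)"
    proof (rule convexI)
      fix x y and v w :: real
      assume x: "x \<in> pos_region D0 \<alpha> \<beta> pc" and y: "y \<in> pos_region D0 \<alpha> \<beta> pc"
        and vw0: "0 \<le> v" "0 \<le> w" "v + w = 1"
      then have vw: "0 \<le> v \<and> 0 \<le> w \<and> v + w = 1" by simp
      show "v *\<^sub>R x + w *\<^sub>R y \<in> pos_region D0 \<alpha> \<beta> pc"
        unfolding pos_region_def
      proof (intro CollectI allI)
        fix i
        have dx: "demand D0 \<alpha> \<beta> pc x i > 0" and dy: "demand D0 \<alpha> \<beta> pc y i > 0"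
          using x y by (auto simp: pos_region_def)
        show "demand D0 \<alpha> \<beta> pc (v *\<^sub>R x + w *\<^sub>R y) i > 0"
          unfolding dem[OF conjunct2[OF conjunct2[OF vw]]]
        proof (cases "v = 0")
          case True then show "v * demand D0 \<alpha> \<beta> pc x i + w * demand D0 \<alpha> \<beta> pc y i > 0" using vw dy by simp
        next
          case False then have "v > 0" using vw by simp
          then have "v * demand D0 \<alpha> \<beta> pc x i > 0" using dx by simp
          moreover have "w * demand D0 \<alpha> \<beta> pc y i \<ge> 0" using vw dy by simp
          ultimately show "v * demand D0 \<alpha> \<beta> pc x i + w * demand D0 \<alpha> \<beta> pc y i > 0" by simp
        qed
      qed
    qed
    show "concave_on (pos_region D0 \<alpha> \<beta> pc) (U_ISP D0 \<alpha> \<beta> \<gamma> pc pa)"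
      unfolding concave_on_iff
    proof (intro conjI cvx ballI allI impI)
      fix x y and v w :: real
      assume vw: "0 \<le> v" "0 \<le> w" "v + w = 1"
      then have w: "w = 1 - v" by simp
      have id: "U_ISP D0 \<alpha> \<beta> \<gamma> pc pa (v *\<^sub>R x + w *\<^sub>R y) = v * U_ISP D0 \<alpha> \<beta> \<gamma> pc pa x + w * U_ISP D0 \<alpha> \<beta> \<gamma> pc pa y
         + v * w * (\<alpha>*\<gamma>$1*((x-y)$1)^2 + \<alpha>*\<gamma>$2*((x-y)$2)^2 - \<beta>*(\<gamma>$1+\<gamma>$2)*((x-y)$1*(x-y)$2))"
        unfolding U_expl w by (simp add: power2_eq_square algebra_simps)
      have "v * w * (\<alpha>*\<gamma>$1*((x-y)$1)^2 + \<alpha>*\<gamma>$2*((x-y)$2)^2 - \<beta>*(\<gamma>$1+\<gamma>$2)*((x-y)$1*(x-y)$2)) \<ge> 0"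
        using vw Qnn[of "x-y"] by simp
      then show "U_ISP D0 \<alpha> \<beta> \<gamma> pc pa (v *\<^sub>R x + w *\<^sub>R y) \<ge> v * U_ISP D0 \<alpha> \<beta> \<gamma> pc pa x + w * U_ISP D0 \<alpha> \<beta> \<gamma> pc pa y"
        using id by simp
    qed
  qed
qed

end
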